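(* Let $P\subset\mathbb{R}^{n+1}$ be an $n$-dimensional lattice polytope contained in the affine hyperplane $\{x_{n+1}=1\}$, of degree $d$, let $x$ be a lattice point in the relative interior of $(n-d+1)P$, and let $S\subset P$ be an $n$-dimensional lattice simplex with vertices $v_0,\dots,v_n$ such that $x$ lies in the cone spanned by $S$. Let $\sigma$ be the cone spanned by $P$. Then for every point $y\in\sigma$, $|V^-(y)|\le|Z^+(y)|$.
   Context: Lattice points are points of $\mathbb{Z}^{n+1}$. The degree $d$ of $P$ is the degree of the $h^*$-polynomial $h^*_P(t)$ defined by $\sum_{m\ge0}|mP\cap\mathbb{Z}^{n+1}|t^m=h^*_P(t)/(1-t)^{n+1}$; equivalently, $d$ is the largest nonnegative integer such that $(n-d)P$ has no lattice points in its relative interior. Every $y\in\mathbb{R}^{n+1}$ is written uniquely as $y=b_0(y)v_0+\dots+b_n(y)v_n$. $Z$ is the set of vertices $v_i$ of $S$ with $b_i(x)=0$; $V$ is the set of vertices $v_j$ of $S$ with $b_j(x)$ a positive integer. For $y\in\mathbb{R}^{n+1}$: $Z^+(y)$ (resp. $Z^-(y)$) is the set of $v_i\in Z$ with $b_i(y)>0$ (resp. $<0$), and $V^+(y)$ (resp. $V^-(y)$) is the set of $v_j\in V$ with $b_j(y)>0$ (resp. $<0$). *)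

theory Defs
  imports "HOL-Analysis.Analysis"
begin

definition lattice_point :: "real ^ 'n \<Rightarrow> bool" where
  "lattice_point z \<longleftrightarrow> (\<forall>i. z $ i \<in> \<int>)"

definition lattice_polytope :: "(real ^ 'n) set \<Rightarrow> bool" where
  "lattice_polytope P \<longleftrightarrow>
     (\<exists>A. finite A \<and> A \<noteq> {} \<and> (\<forall>a\<in>A. lattice_point a) \<and> P = convex hull A)"

definition dilate :: "nat \<Rightarrow> (real ^ 'n) set \<Rightarrow> (real ^ 'n) set" where
  "dilate k P = (\<lambda>z. real k *\<^sub>R z) ` P"

text \<open>Degree of an n-dimensional lattice polytope P, via the lattice-point
  characterisation of the degree of the h*-polynomial: kP has no lattice point
  in its relative interior for all 1 \<le> k \<le> n - d, and d is minimal with this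
  property (equivalently, n + 1 - d is the codegree, the least k \<ge> 1 such that
  kP has a relative-interior lattice point).\<close>
definition lattice_degree :: "nat \<Rightarrow> (real ^ 'n) set \<Rightarrow> nat" where
  "lattice_degree n P =
     (LEAST d. \<forall>k. 1 \<le> k \<and> k \<le> n - d \<longrightarrow>
                  (\<forall>z \<in> rel_interior (dilate k P). \<not> lattice_point z))"

definition bary :: "(nat \<Rightarrow> real ^ 'n) \<Rightarrow> nat \<Rightarrow> real ^ 'n \<Rightarrow> nat \<Rightarrow> real" where
  "bary v n y = (THE c. (\<Sum>i\<le>n. c i *\<^sub>R v i) = y \<and> (\<forall>i>n. c i = 0))"

end

theory Submission
  imports Defs
begin

lemma int_pos_ge1: "(a::real) \<in> \<int> \<Longrightarrow> a > 0 \<Longrightarrow> a \<ge> 1"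
  by (metis Ints_cases of_int_0_less_iff of_int_1_le_iff zero_less_imp_eq_int not_less int_one_le_iff_zero_less)

theorem lemma2p4:
  fixes P :: "(real ^ 'm) set" and n d :: nat and last :: 'm
    and x :: "real ^ 'm" and v :: "nat \<Rightarrow> real ^ 'm" and y :: "real ^ 'm"
  assumes dim_space: "CARD('m) = n + 1"
    and P_poly: "lattice_polytope P"
    and P_dim: "aff_dim P = int n"
    and P_hyp: "P \<subseteq> {z. z $ last = 1}"
    and P_deg: "d = lattice_degree n P"
    and x_lat: "lattice_point x"
    and x_int: "x \<in> rel_interior (dilate (n - d + 1) P)"
    and v_lat: "\<forall>i\<le>n. lattice_point (v i)"
    and S_dim: "aff_dim (convex hull (v ` {..n})) = int n"
    and S_sub: "convex hull (v ` {..n}) \<subseteq> P"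
    and x_cone: "x \<in> cone hull (convex hull (v ` {..n}))"
    and y_cone: "y \<in> cone hull P"
  shows "card {j. j \<le> n \<and> bary v n x j \<in> \<int> \<and> bary v n x j > 0 \<and> bary v n y j < 0}
         \<le> card {i. i \<le> n \<and> bary v n x i = 0 \<and> bary v n y i > 0}"
proof -
  define V where "V = v ` {..n}"
  have finV: "finite V" unfolding V_def by simp
  have vP: "\<And>i. i \<le> n \<Longrightarrow> v i \<in> P"
  proof -
    fix i assume "i \<le> n"
    hence "v i \<in> convex hull (v ` {..n})" by (intro hull_inc) auto
    thus "v i \<in> P" using S_sub by blast
  qed
  have vh: "\<And>i. i \<le> n \<Longrightarrow> v i $ last = 1" using vP P_hyp by blast
  have affV: "aff_dim V = int n" using S_dim unfolding V_def by (simp add: aff_dim_convex_hull)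
  have "int n \<le> int (card V) - 1" using aff_dim_le_card[OF finV] affV by simp
  moreover have "card V \<le> n + 1" unfolding V_def using card_image_le[of "{..n}" v] by simp
  ultimately have cardV: "card V = n + 1" by linarith
  have injv: "inj_on v {..n}"
    using cardV unfolding V_def by (intro eq_card_imp_inj_on) auto
  have indepA: "\<not> affine_dependent V"
    by (simp add: affine_independent_iff_card finV affV cardV)
  have reidx: "\<And>u. (\<Sum>w\<in>V. u w *\<^sub>R w) = (\<Sum>i\<le>n. u (v i) *\<^sub>R v i)"
    unfolding V_def using sum.reindex[OF injv] by (simp add: comp_def)
  have reidx2: "\<And>u. (\<Sum>w\<in>V. u w) = (\<Sum>i\<le>n. u (v i))"
    unfolding V_def using sum.reindex[OF injv] by (simp add: comp_def)
  have uniq0: "\<And>c. (\<Sum>i\<le>n. c i *\<^sub>R v i) = 0 \<Longrightarrow> \<forall>i\<le>n. c i = 0"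
  proof -
    fix c assume c0: "(\<Sum>i\<le>n. c i *\<^sub>R v i) = 0"
    define U where "U w = c (inv_into {..n} v w)" for w
    have Uv: "\<And>i. i \<le> n \<Longrightarrow> U (v i) = c i" unfolding U_def using injv by simp
    have "(\<Sum>w\<in>V. U w *\<^sub>R w) = 0" using c0 reidx[of U] Uv by simp
    moreover have "(\<Sum>w\<in>V. U w) = 0"
    proof -
      have "(\<Sum>i\<le>n. c i *\<^sub>R v i) $ last = (\<Sum>i\<le>n. c i)"
        using vh by (simp add: sum_component)
      thus ?thesis using c0 reidx2[of U] Uv by simp
    qed
    ultimately have "\<forall>w\<in>V. U w = 0"
      using indepA affine_dependent_explicit_finite[OF finV] by blast
    thus "\<forall>i\<le>n. c i = 0" using Uv unfolding V_def by auto
  qed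
  have "independent V"
  proof
    assume "dependent V"
    then obtain u where u: "\<exists>w\<in>V. u w \<noteq> 0" "(\<Sum>w\<in>V. u w *\<^sub>R w) = 0"
      using dependent_finite[OF finV] by blast
    have "\<forall>i\<le>n. u (v i) = 0" using uniq0[of "\<lambda>i. u (v i)"] u(2) reidx by simp
    thus False using u(1) unfolding V_def by auto
  qed
  hence "dim V = n + 1" using dim_eq_card_independent[of V] cardV by simp
  hence spanV: "span V = UNIV" using dim_eq_full[of V] dim_space by simp
  have repr: "\<And>z. \<exists>c. (\<Sum>i\<le>n. c i *\<^sub>R v i) = z"
  proof -
    fix z :: "real^'m"
    have "z \<in> span V" using spanV by simp
    then obtain u where "(\<Sum>w\<in>V. u w *\<^sub>R w) = z" using span_finite[OF finV] by auto
    thus "\<exists>c. (\<Sum>i\<le>n. c i *\<^sub>R v i) = z" using reidx by metis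
  qed
  have ex1: "\<And>z. \<exists>!c. (\<Sum>i\<le>n. c i *\<^sub>R v i) = z \<and> (\<forall>i>n. c i = 0)"
  proof -
    fix z
    obtain c where c: "(\<Sum>i\<le>n. c i *\<^sub>R v i) = z" using repr by blast
    define c' where "c' i = (if i \<le> n then c i else 0)" for i
    have "(\<Sum>i\<le>n. c' i *\<^sub>R v i) = z \<and> (\<forall>i>n. c' i = 0)"
      using c unfolding c'_def by simp
    moreover have "c1 = c2" if "(\<Sum>i\<le>n. c1 i *\<^sub>R v i) = z \<and> (\<forall>i>n. c1 i = 0)"
       "(\<Sum>i\<le>n. c2 i *\<^sub>R v i) = z \<and> (\<forall>i>n. c2 i = 0)" for c1 c2
    proof
      fix i
      have "(\<Sum>i\<le>n. (c1 i - c2 i) *\<^sub>R v i) = 0"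
        using that by (simp add: scaleR_diff_left sum_subtractf)
      hence "\<forall>i\<le>n. c1 i - c2 i = 0" by (rule uniq0)
      thus "c1 i = c2 i" using that by (cases "i \<le> n") auto
    qed
    ultimately show "\<exists>!c. (\<Sum>i\<le>n. c i *\<^sub>R v i) = z \<and> (\<forall>i>n. c i = 0)" by blast
  qed
  have bary_repr: "\<And>z. (\<Sum>i\<le>n. bary v n z i *\<^sub>R v i) = z"
    unfolding bary_def using theI'[OF ex1] by blast
  have bary_uniq: "\<And>z c i. (\<Sum>i\<le>n. c i *\<^sub>R v i) = z \<Longrightarrow> i \<le> n \<Longrightarrow> bary v n z i = c i"
  proof -
    fix z c i assume c: "(\<Sum>i\<le>n. c i *\<^sub>R v i) = z" and i: "i \<le> n"
    have "(\<Sum>i\<le>n. (bary v n z i - c i) *\<^sub>R v i) = 0"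
      using c bary_repr[of z] by (simp add: scaleR_diff_left sum_subtractf)
    thus "bary v n z i = c i" using uniq0 i by fastforce
  qed
  have bx_nn: "\<And>i. i \<le> n \<Longrightarrow> bary v n x i \<ge> 0"
  proof -
    fix i assume i: "i \<le> n"
    obtain a s where as: "x = a *\<^sub>R s" "a \<ge> 0" "s \<in> convex hull V"
      using x_cone unfolding cone_hull_expl V_def by blast
    obtain u where u: "\<forall>w\<in>V. 0 \<le> u w" "(\<Sum>w\<in>V. u w *\<^sub>R w) = s"
      using as(3) convex_hull_finite[OF finV] by blast
    have "x = a *\<^sub>R (\<Sum>k\<le>n. u (v k) *\<^sub>R v k)"
      using u(2) reidx[of u] as(1) by simp
    hence "(\<Sum>k\<le>n. (a * u (v k)) *\<^sub>R v k) = x"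
      by (simp add: scaleR_sum_right)
    hence "bary v n x i = a * u (v i)" by (rule bary_uniq[OF _ i])
    moreover have "u (v i) \<ge> 0" using u(1) i unfolding V_def by auto
    ultimately show "bary v n x i \<ge> 0" using as(2) by simp
  qed
  obtain A where A: "finite A" "A \<noteq> {}" "\<forall>a\<in>A. lattice_point a" "P = convex hull A"
    using P_poly unfolding lattice_polytope_def by blast
  have convP: "convex P" using A(4) by simp
  have Pne: "P \<noteq> {}" using A(2) A(4) by simp
  define sig where "sig = cone hull P"
  have sig_cone: "cone sig" unfolding sig_def by (rule cone_cone_hull)
  have sig_conv: "convex sig" unfolding sig_def using convP by (rule convex_cone_hull)
  have sig_scale: "\<And>c z. z \<in> sig \<Longrightarrow> c \<ge> 0 \<Longrightarrow> c *\<^sub>R z \<in> sig"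
    using sig_cone unfolding cone_def by blast
  have sig_add: "\<And>a b. a \<in> sig \<Longrightarrow> b \<in> sig \<Longrightarrow> a + b \<in> sig"
  proof -
    fix a b assume ab: "a \<in> sig" "b \<in> sig"
    have "(1/2) *\<^sub>R a + (1/2) *\<^sub>R b \<in> sig"
      using convexD[OF sig_conv ab, of "1/2" "1/2"] by simp
    from sig_scale[OF this, of 2] show "a + b \<in> sig" by (simp add: scaleR_add_right)
  qed
  have sig0: "0 \<in> sig" unfolding sig_def using Pne cone_hull_contains_0 by blast
  have Psig: "P \<subseteq> sig" unfolding sig_def by (rule hull_subset)
  have sig_sum: "\<And>I f. finite I \<Longrightarrow> (\<forall>i\<in>I. f i \<in> sig) \<Longrightarrow> sum f I \<in> sig"
  proof -
    fix I :: "'b set" and f assume "finite I" "\<forall>i\<in>I. f i \<in> sig"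
    thus "sum f I \<in> sig"
      by (induction I rule: finite_induct) (auto intro: sig0 sig_add)
  qed
  have sig_expl: "\<And>z. z \<in> sig \<Longrightarrow> \<exists>c p. c \<ge> 0 \<and> p \<in> P \<and> z = c *\<^sub>R p"
    unfolding sig_def cone_hull_expl by blast
  have sig_h: "\<And>z. z \<in> sig \<Longrightarrow> z $ last \<ge> 0"
  proof -
    fix z assume "z \<in> sig"
    then obtain c p where "c \<ge> 0" "p \<in> P" "z = c *\<^sub>R p" using sig_expl by blast
    thus "z $ last \<ge> 0" using P_hyp by auto
  qed
  have slice: "\<And>z k. z \<in> sig \<Longrightarrow> z $ last = real k \<Longrightarrow> k > 0 \<Longrightarrow> z \<in> dilate k P"
  proof -
    fix z k assume z: "z \<in> sig" "z $ last = real k" "k > 0"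
    then obtain c p where cp: "c \<ge> 0" "p \<in> P" "z = c *\<^sub>R p" using sig_expl by blast
    have "p $ last = 1" using cp(2) P_hyp by auto
    hence "c = real k" using z(2) cp(3) by simp
    thus "z \<in> dilate k P" unfolding dilate_def using cp by blast
  qed
  have dil_sig: "\<And>k. dilate k P \<subseteq> sig"
    unfolding dilate_def using Psig sig_scale by auto
  define H1 where "H1 = {z::real^'m. axis last 1 \<bullet> z = 1}"
  have H1_eq: "\<And>z. z \<in> H1 \<longleftrightarrow> z $ last = 1"
    unfolding H1_def by (simp add: inner_axis')
  have affP: "affine hull P = H1"
  proof (rule affine_dim_equal)
    show "affine (affine hull P)" by simp
    show affH1: "affine H1" unfolding H1_def by (rule affine_hyperplane)
    show "affine hull P \<noteq> {}" using Pne by simp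
    show "affine hull P \<subseteq> H1"
    proof (rule hull_minimal)
      show "P \<subseteq> H1" using P_hyp H1_eq by blast
    qed (rule affH1)
    have "aff_dim H1 = int (DIM(real^'m) - 1)" unfolding H1_def
      by (rule aff_dim_hyperplane) (simp add: axis_eq_0_iff)
    thus "aff_dim (affine hull P) = aff_dim H1" using P_dim dim_space by simp
  qed
  have AH: "\<And>k u. k > 0 \<Longrightarrow> u \<in> affine hull (dilate k P) \<longleftrightarrow> u $ last = real k"
  proof -
    fix k :: nat and u assume k: "k > 0"
    have "affine hull (dilate k P) = (\<lambda>z. real k *\<^sub>R z) ` (affine hull P)"
      unfolding dilate_def using affine_hull_linear_image[of "\<lambda>z. real k *\<^sub>R z" P]
      by (simp add: bounded_linear_scaleR_right)
    also have "\<dots> = (\<lambda>z. real k *\<^sub>R z) ` H1" using affP by simp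
    finally have e: "affine hull (dilate k P) = (\<lambda>z. real k *\<^sub>R z) ` H1" .
    show "u \<in> affine hull (dilate k P) \<longleftrightarrow> u $ last = real k"
    proof
      assume "u \<in> affine hull (dilate k P)"
      then obtain q where "q \<in> H1" "u = real k *\<^sub>R q" using e by auto
      thus "u $ last = real k" using H1_eq by simp
    next
      assume u: "u $ last = real k"
      have "(1 / real k) *\<^sub>R u \<in> H1" using u k H1_eq by simp
      moreover have "u = real k *\<^sub>R ((1 / real k) *\<^sub>R u)" using k by simp
      ultimately show "u \<in> affine hull (dilate k P)" using e by blast
    qed
  qed
  define bx where "bx = bary v n x"
  define by' where "by' = bary v n y"
  define W where "W = {j. j \<le> n \<and> bx j \<in> \<int> \<and> bx j > 0 \<and> by' j < 0}"
  define Zp where "Zp = {i. i \<le> n \<and> bx i = 0 \<and> by' i > 0}"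
  have finW: "finite W" and finZ: "finite Zp" unfolding W_def Zp_def by auto
  have WsubN: "W \<subseteq> {..n}" and ZsubN: "Zp \<subseteq> {..n}" unfolding W_def Zp_def by auto
  define c where "c t k = bx k * (1 - t * t) + (if k \<in> Zp then 1 else 0)
      - (if k \<in> W then 1 else 0) - t * by' k" for t :: real and k
  have ev: "\<forall>k\<in>{..n}. eventually (\<lambda>t. 0 \<le> c t k) (at_right 0)"
  proof
    fix k assume "k \<in> {..n}"
    hence k: "k \<le> n" by simp
    have bxk: "bx k \<ge> 0" using bx_nn k unfolding bx_def by simp
    have "\<exists>b>0. \<forall>t>0. t < b \<longrightarrow> 0 \<le> c t k"
    proof (cases "k \<in> Zp")
      case True
      hence z: "bx k = 0" "by' k > 0" and nW: "k \<notin> W" unfolding Zp_def W_def by auto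
      show ?thesis
      proof (intro exI[of _ "1 / by' k"] conjI allI impI)
        show "0 < 1 / by' k" using z by simp
        fix t :: real assume "0 < t" "t < 1 / by' k"
        hence "t * by' k < 1" using z by (simp add: less_divide_eq)
        thus "0 \<le> c t k" unfolding c_def using z nW True by simp
      qed
    next
      case nZ: False
      show ?thesis
      proof (cases "k \<in> W")
        case True
        hence w: "bx k \<ge> 1" "by' k < 0" unfolding W_def using int_pos_ge1 by auto
        show ?thesis
        proof (intro exI[of _ "min 1 (- by' k)"] conjI allI impI)
          show "0 < min 1 (- by' k)" using w by simp
          fix t :: real assume t: "0 < t" "t < min 1 (- by' k)"
          have tt: "1 - t * t \<ge> 0" using t by (simp add: mult_le_one)
          have "bx k * (1 - t * t) \<ge> 1 * (1 - t * t)" using w(1) tt by (rule mult_right_mono)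
          moreover have "t * (- by' k - t) \<ge> 0" using t by simp
          ultimately show "0 \<le> c t k" unfolding c_def using nZ True
            by (simp add: algebra_simps)
        qed
      next
        case nW: False
        show ?thesis
        proof (cases "bx k = 0")
          case True
          hence "by' k \<le> 0" using nZ k unfolding Zp_def by auto
          thus ?thesis unfolding c_def using nZ nW True
            by (intro exI[of _ 1]) (auto simp: mult_nonpos_nonneg mult_le_0_iff)
        next
          case False
          hence bp: "bx k > 0" using bxk by simp
          define b where "b = min (1/2) (bx k / (2 * (\<bar>by' k\<bar> + 1)))"
          have bpos: "b > 0" unfolding b_def using bp by (simp add: add_pos_nonneg)
          show ?thesis
          proof (intro exI[of _ b] conjI allI impI bpos)
            fix t :: real assume t: "0 < t" "t < b"
            have t1: "t \<le> 1/2" using t unfolding b_def by simp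
            have "t * (2 * (\<bar>by' k\<bar> + 1)) < bx k"
              using t unfolding b_def by (simp add: less_divide_eq add_pos_nonneg)
            hence e2: "2 * (t * (\<bar>by' k\<bar> + 1)) < bx k" by (simp add: algebra_simps)
            have e1: "t * by' k \<le> t * (\<bar>by' k\<bar> + 1)"
              using t(1) by (intro mult_left_mono) auto
            have a1: "t * by' k \<le> bx k / 2" using e1 e2 by linarith
            have "t * t \<le> (1/2) * (1/2)" using t1 t(1) by (intro mult_mono) auto
            hence a2: "bx k * (1 - t * t) \<ge> bx k * (3/4)" using bp by (intro mult_left_mono) auto
            have "0 \<le> bx k * (1 - t * t) - t * by' k" using a1 a2 bp by linarith
            thus "0 \<le> c t k" unfolding c_def using nZ nW by simp
          qed
        qed
      qed
    qed
    thus "eventually (\<lambda>t. 0 \<le> c t k) (at_right 0)"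
      by (simp add: eventually_at_right_field)
  qed
  have "eventually (\<lambda>t. \<forall>k\<in>{..n}. 0 \<le> c t k) (at_right 0)"
    by (rule eventually_ball_finite[OF _ ev]) simp
  hence "\<exists>b>0. \<forall>t>0. t < b \<longrightarrow> (\<forall>k\<in>{..n}. 0 \<le> c t k)"
    unfolding eventually_at_right_field by simp
  then obtain b where b: "b > 0" "\<forall>t>0. t < b \<longrightarrow> (\<forall>k\<in>{..n}. 0 \<le> c t k)"
    by blast
  define t where "t = min b 1 / 2"
  have t: "t > 0" "t < 1" using b unfolding t_def by auto
  have tc: "\<forall>k\<le>n. 0 \<le> c t k" using b(2) t(1) unfolding t_def by auto
  have sx: "(\<Sum>k\<le>n. bx k *\<^sub>R v k) = x" unfolding bx_def by (rule bary_repr)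
  have sy: "(\<Sum>k\<le>n. by' k *\<^sub>R v k) = y" unfolding by'_def by (rule bary_repr)
  define z where "z = x + (\<Sum>i\<in>Zp. v i) - (\<Sum>j\<in>W. v j)"
  define w where "w = (\<Sum>k\<le>n. c t k *\<^sub>R v k)"
  have w_sig: "w \<in> sig" unfolding w_def
  proof (rule sig_sum)
    show "\<forall>i\<in>{..n}. c t i *\<^sub>R v i \<in> sig" using tc vP Psig by (auto intro!: sig_scale)
  qed simp
  have ind: "\<And>B. B \<subseteq> {..n} \<Longrightarrow> (\<Sum>k\<le>n. (if k \<in> B then 1 else 0) *\<^sub>R v k) = (\<Sum>i\<in>B. v i)"
  proof -
    fix B assume B: "B \<subseteq> {..n}"
    have "(\<Sum>k\<le>n. (if k \<in> B then 1 else 0) *\<^sub>R v k) = (\<Sum>k\<le>n. if k \<in> B then v k else 0)"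
      by (intro sum.cong) auto
    also have "\<dots> = sum v ({..n} \<inter> B)" by (simp add: sum.inter_restrict)
    also have "{..n} \<inter> B = B" using B by blast
    finally show "(\<Sum>k\<le>n. (if k \<in> B then 1 else 0) *\<^sub>R v k) = (\<Sum>i\<in>B. v i)" .
  qed
  have s1: "(\<Sum>k\<le>n. (bx k * (1 - t*t)) *\<^sub>R v k) = (1 - t*t) *\<^sub>R x"
  proof -
    have "(1 - t*t) *\<^sub>R x = (1 - t*t) *\<^sub>R (\<Sum>k\<le>n. bx k *\<^sub>R v k)" using sx by simp
    also have "\<dots> = (\<Sum>k\<le>n. (1 - t*t) *\<^sub>R (bx k *\<^sub>R v k))" by (rule scaleR_sum_right)
    also have "\<dots> = (\<Sum>k\<le>n. (bx k * (1 - t*t)) *\<^sub>R v k)" by (simp add: mult.commute)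
    finally show ?thesis by simp
  qed
  have s4: "(\<Sum>k\<le>n. (t * by' k) *\<^sub>R v k) = t *\<^sub>R y"
  proof -
    have "t *\<^sub>R y = t *\<^sub>R (\<Sum>k\<le>n. by' k *\<^sub>R v k)" using sy by simp
    also have "\<dots> = (\<Sum>k\<le>n. t *\<^sub>R (by' k *\<^sub>R v k))" by (rule scaleR_sum_right)
    also have "\<dots> = (\<Sum>k\<le>n. (t * by' k) *\<^sub>R v k)" by simp
    finally show ?thesis by simp
  qed
  have "w = (\<Sum>k\<le>n. (bx k * (1 - t*t)) *\<^sub>R v k + (if k \<in> Zp then 1 else 0) *\<^sub>R v k
        - (if k \<in> W then 1 else 0) *\<^sub>R v k - (t * by' k) *\<^sub>R v k)"
    unfolding w_def c_def by (intro sum.cong refl) (simp only: scaleR_add_left scaleR_diff_left)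
  also have "\<dots> = (1 - t*t) *\<^sub>R x + (\<Sum>i\<in>Zp. v i) - (\<Sum>i\<in>W. v i) - t *\<^sub>R y"
    using s1 s4 ind[OF ZsubN] ind[OF WsubN] by (simp add: sum.distrib sum_subtractf)
  finally have w_eq: "w = (1 - t*t) *\<^sub>R x + (\<Sum>i\<in>Zp. v i) - (\<Sum>i\<in>W. v i) - t *\<^sub>R y" .
  have z_eq: "z = w + t *\<^sub>R y + (t*t) *\<^sub>R x"
    unfolding z_def w_eq by (simp add: algebra_simps)
  define k0 where "k0 = n - d + 1"
  have k0pos: "k0 > 0" unfolding k0_def by simp
  have x_dil: "x \<in> dilate k0 P" using x_int rel_interior_subset unfolding k0_def by blast
  then obtain p where p: "p \<in> P" "x = real k0 *\<^sub>R p" unfolding dilate_def by blast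
  have xh: "x $ last = real k0" using p P_hyp by auto
  have x_sig: "x \<in> sig" using x_dil dil_sig by blast
  have y_sig: "y \<in> sig" using y_cone unfolding sig_def .
  have sumh: "\<And>B. B \<subseteq> {..n} \<Longrightarrow> (\<Sum>i\<in>B. v i) $ last = real (card B)"
    using vh by (simp add: sum_component subset_iff)
  have zh: "z $ last = real k0 + real (card Zp) - real (card W)"
    unfolding z_def using xh sumh[OF ZsubN] sumh[OF WsubN] by simp
  have zpos: "z $ last > 0"
  proof -
    have "w $ last \<ge> 0" "y $ last \<ge> 0" using sig_h w_sig y_sig by auto
    moreover have "t * (y $ last) \<ge> 0" "(t*t) * (x $ last) > 0"
      using t xh k0pos calculation by auto
    ultimately show ?thesis unfolding z_eq by simp
  qed
  have goal_eq: "?thesis \<longleftrightarrow> card W \<le> card Zp"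
    unfolding W_def Zp_def bx_def by'_def by simp
  show ?thesis unfolding goal_eq
  proof (rule ccontr)
    assume "\<not> card W \<le> card Zp"
    hence WZ: "card Zp + 1 \<le> card W" by simp
    define hi where "hi = int k0 + int (card Zp) - int (card W)"
    have zhi: "z $ last = of_int hi" unfolding hi_def zh by simp
    have hipos: "hi > 0" using zpos zhi by simp
    define h where "h = nat hi"
    have hpos: "h > 0" and h1: "1 \<le> h" using hipos unfolding h_def by auto
    have hle: "h \<le> n - d" using WZ hipos unfolding h_def hi_def k0_def by linarith
    have zh2: "z $ last = real h" using zhi hipos unfolding h_def by simp
    have zlat: "lattice_point z"
      unfolding lattice_point_def z_def
    proof
      fix i
      have "x $ i \<in> \<int>" using x_lat unfolding lattice_point_def by blast
      moreover have "(\<Sum>j\<in>Zp. v j) $ i \<in> \<int>" "(\<Sum>j\<in>W. v j) $ i \<in> \<int>"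
        unfolding sum_component using v_lat ZsubN WsubN unfolding lattice_point_def
        by (auto intro!: Ints_sum)
      ultimately show "(x + (\<Sum>i\<in>Zp. v i) - (\<Sum>j\<in>W. v j)) $ i \<in> \<int>" by simp
    qed
    obtain e where e: "e > 0" "ball x e \<inter> affine hull (dilate k0 P) \<subseteq> dilate k0 P"
      using x_int mem_rel_interior_ball unfolding k0_def by blast
    have tt: "t * t > 0" using t by simp
    have K: "\<And>u. dist z u < t * t * e \<Longrightarrow> u $ last = real h \<Longrightarrow> u \<in> dilate h P"
    proof -
      fix u assume u: "dist z u < t * t * e" "u $ last = real h"
      define x' where "x' = x + (1 / (t*t)) *\<^sub>R (u - z)"
      have "dist x x' = norm (u - z) / (t * t)" unfolding x'_def dist_norm using tt by simp
      also have "\<dots> < e" using u(1) tt by (simp add: dist_norm norm_minus_commute divide_less_eq mult.commute)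
      finally have "x' \<in> ball x e" by simp
      moreover have "x' $ last = real k0" unfolding x'_def using xh u(2) zh2 by simp
      hence "x' \<in> affine hull (dilate k0 P)" using AH[OF k0pos] by simp
      ultimately have "x' \<in> dilate k0 P" using e(2) by blast
      hence x's: "x' \<in> sig" using dil_sig by blast
      have "(t*t) *\<^sub>R x' = (t*t) *\<^sub>R x + (u - z)" unfolding x'_def using tt t(1)
        by (simp add: scaleR_add_right)
      hence "u = z + ((t*t) *\<^sub>R x' - (t*t) *\<^sub>R x)" by simp
      also have "\<dots> = w + t *\<^sub>R y + (t*t) *\<^sub>R x'" unfolding z_eq by simp
      finally have ueq: "u = w + t *\<^sub>R y + (t*t) *\<^sub>R x'" .
      have "w + t *\<^sub>R y + (t*t) *\<^sub>R x' \<in> sig"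
        using t(1) tt by (intro sig_add w_sig sig_scale y_sig x's) auto
      hence "u \<in> sig" using ueq by simp
      thus "u \<in> dilate h P" using slice u(2) hpos by blast
    qed
    have "z \<in> rel_interior (dilate h P)"
      unfolding mem_rel_interior_ball
    proof (intro conjI exI[of _ "t * t * e"])
      show "z \<in> dilate h P" using K[of z] zh2 tt e(1) by simp
      show "0 < t * t * e" using tt e(1) by simp
      show "ball z (t * t * e) \<inter> affine hull dilate h P \<subseteq> dilate h P"
      proof
        fix u assume "u \<in> ball z (t * t * e) \<inter> affine hull dilate h P"
        hence "dist z u < t * t * e" "u $ last = real h" using AH[OF hpos, of u] by auto
        thus "u \<in> dilate h P" by (rule K)
      qed
    qed
    define Q where "Q = (\<lambda>d. \<forall>k. 1 \<le> k \<and> k \<le> n - d \<longrightarrow>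
                  (\<forall>z \<in> rel_interior (dilate k P). \<not> lattice_point z))"
    have "Q n" unfolding Q_def by simp
    hence "Q (Least Q)" by (rule LeastI)
    moreover have "lattice_degree n P = Least Q" unfolding lattice_degree_def Q_def by (rule refl)
    ultimately have Qd: "Q d" using P_deg by simp
    have "\<forall>z \<in> rel_interior (dilate h P). \<not> lattice_point z"
      using Qd h1 hle unfolding Q_def by blast
    thus False using zlat \<open>z \<in> rel_interior (dilate h P)\<close> by blast
  qed
qed

end
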